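(* For every $t\in[0,T]$ and every sufficiently small $\epsilon>0$, $$\mathbb E\big[\|\Theta_1(t)\|_{L^4}^4\big]\le C(H)\,\tau^{4H-1-2\epsilon}\quad\text{and}\quad\mathbb E\big[\|\Theta_2(t)\|_{L^4}^4\big]\le C(H)\,\tau^{4H-1-2\epsilon},$$ with a constant $C(H)$ independent of $t$, $N$ and $\tau$.
   Context: Let $\mathcal D=(0,1)$, $U=L^2(\mathcal D)$, $\|\cdot\|_{L^4}$ the $L^4(\mathcal D)$ norm. $A=-\partial_x^2$ with homogeneous Dirichlet boundary conditions, eigenfunctions $\phi_k(x)=\sqrt2\sin(k\pi x)$, eigenvalues $\lambda_k=k^2\pi^2$. $P_N$ is the orthogonal projection onto $\mathrm{span}\{\phi_1,\dots,\phi_N\}$, $A_N=P_NA$, $S_N(t)=e^{-tA_N}$. Fix $T>0$, $H\in(\frac12,1)$; $\{w_k^H\}$ independent real standard fBms with Hurst parameter $H$ on a probability space, $B^H=\sum_kw_k^H\phi_k$, $\int g\,dB^H:=\sum_k\int g\phi_k\,dw_k^H$. For $M\in\mathbb N$, $\tau=T/M$, $\kappa(t)=\tau\lfloor t/\tau\rfloor$, and $$\Theta_1(t)=\int_{\kappa(t)}^tS_N(t-s)P_N\,dB^H(s),\qquad \Theta_2(t)=\int_0^{\kappa(t)}\big(S_N(t-s)-S_N(\kappa(t)-s)\big)P_N\,dB^H(s).$$ *)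

theory Defs
  imports "HOL-Probability.Probability"
begin

definition fbm_cov :: "real \<Rightarrow> real \<Rightarrow> real \<Rightarrow> real" where
  "fbm_cov H s t = (\<bar>s\<bar> powr (2*H) + \<bar>t\<bar> powr (2*H) - \<bar>t - s\<bar> powr (2*H)) / 2"

(* W is a real standard fractional Brownian motion with Hurst parameter H on (M):
   a centred Gaussian process on [0,\<infinity>) with covariance fbm_cov H and continuous paths.
   Gaussianity: every finite linear combination is centred normal (characteristic
   function exp(-u^2 v/2), v the variance; this includes the degenerate case v = 0). *)
definition is_fbm :: "'a measure \<Rightarrow> real \<Rightarrow> (real \<Rightarrow> 'a \<Rightarrow> real) \<Rightarrow> bool" where
  "is_fbm M H W \<longleftrightarrow>
     (\<forall>t. W t \<in> borel_measurable M) \<and>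
     (\<forall>\<omega>\<in>space M. continuous_on {0..} (\<lambda>t. W t \<omega>)) \<and>
     (\<forall>(ts::real list) (as::real list). length as = length ts \<and> (\<forall>s\<in>set ts. 0 \<le> s) \<longrightarrow>
        (\<forall>u::real. char (distr M borel (\<lambda>\<omega>. \<Sum>i<length ts. as!i * W (ts!i) \<omega>)) u =
           complex_of_real (exp (- (u^2 * (\<Sum>i<length ts. \<Sum>j<length ts.
                 as!i * as!j * fbm_cov H (ts!i) (ts!j))) / 2))))"

(* Wiener integral of a smooth deterministic integrand f over [a,b] against the path W,
   realised pathwise (Riemann--Stieltjes / Young integral via integration by parts). *)
definition wint :: "(real \<Rightarrow> real) \<Rightarrow> real \<Rightarrow> real \<Rightarrow> (real \<Rightarrow> 'a \<Rightarrow> real) \<Rightarrow> 'a \<Rightarrow> real" where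
  "wint f a b W \<omega> = f b * W b \<omega> - f a * W a \<omega> - integral {a..b} (\<lambda>s. deriv f s * W s \<omega>)"

(* Dirichlet Laplacian on (0,1): eigenfunctions and eigenvalues *)
definition phi :: "nat \<Rightarrow> real \<Rightarrow> real" where
  "phi k x = sqrt 2 * sin (real k * pi * x)"

definition lam :: "nat \<Rightarrow> real" where
  "lam k = (real k)^2 * pi^2"

definition kappa :: "real \<Rightarrow> real \<Rightarrow> real" where
  "kappa \<tau> t = \<tau> * of_int \<lfloor>t / \<tau>\<rfloor>"

(* Theta_1(t) = int_{kappa(t)}^t S_N(t-s) P_N dB^H(s), written in the eigenbasis:
   S_N(t-s)P_N phi_k = exp(-lam_k (t-s)) phi_k for k <= N, and 0 for k > N. *)
definition Theta1 :: "(nat \<Rightarrow> real \<Rightarrow> 'a \<Rightarrow> real) \<Rightarrow> nat \<Rightarrow> real \<Rightarrow> real \<Rightarrow> 'a \<Rightarrow> real \<Rightarrow> real" where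
  "Theta1 W N \<tau> t \<omega> x =
     (\<Sum>k=1..N. wint (\<lambda>s. exp (- lam k * (t - s))) (kappa \<tau> t) t (W k) \<omega> * phi k x)"

(* Theta_2(t) = int_0^{kappa(t)} (S_N(t-s) - S_N(kappa(t)-s)) P_N dB^H(s) *)
definition Theta2 :: "(nat \<Rightarrow> real \<Rightarrow> 'a \<Rightarrow> real) \<Rightarrow> nat \<Rightarrow> real \<Rightarrow> real \<Rightarrow> 'a \<Rightarrow> real \<Rightarrow> real" where
  "Theta2 W N \<tau> t \<omega> x =
     (\<Sum>k=1..N. wint (\<lambda>s. exp (- lam k * (t - s)) - exp (- lam k * (kappa \<tau> t - s)))
                      0 (kappa \<tau> t) (W k) \<omega> * phi k x)"

definition L4pow4 :: "(real \<Rightarrow> real) \<Rightarrow> real" where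
  "L4pow4 u = integral {0..1} (\<lambda>x. \<bar>u x\<bar> ^ 4)"

end

theory Submission
  imports Defs
begin

lemma gauss4:
  fixes P :: "'a measure" and S :: "'a \<Rightarrow> real"
  assumes P: "prob_space P" and S[measurable]: "S \<in> borel_measurable P"
    and ch: "\<And>u. char (distr P borel S) u = complex_of_real (exp (- (u^2 * V) / 2))"
  shows "V \<ge> 0" "(\<integral>\<^sup>+\<omega>. ennreal (S \<omega> ^ 4) \<partial>P) = ennreal (3 * V^2)"
proof -
  interpret prob_space P by fact
  have rd: "real_distribution (distr P borel S)" by simp
  have "norm (char (distr P borel S) 1) \<le> 1" by (rule real_distribution.cmod_char_le_1[OF rd])
  then have "exp (- V / 2) \<le> 1" using ch[of 1] by simp
  then show V0: "V \<ge> 0" by simp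
  let ?N = "distr std_normal_distribution borel (\<lambda>x. sqrt V * x)"
  interpret sn: prob_space std_normal_distribution
    using real_dist_normal_dist real_distribution_def by blast
  have rd2: "real_distribution ?N" by (rule sn.real_distribution_distr) simp
  have "char ?N = char (distr P borel S)"
  proof
    fix u
    have "char ?N u = char std_normal_distribution (u * sqrt V)"
      unfolding char_def by (subst integral_distr) (auto simp: mult.assoc)
    also have "\<dots> = complex_of_real (exp (- (u^2 * V) / 2))"
      using V0 by (simp add: char_std_normal_distribution power_mult_distrib)
    finally show "char ?N u = char (distr P borel S) u" using ch by simp
  qed
  then have eq: "distr P borel S = ?N" using Levy_uniqueness[OF rd rd2] by simp
  have "(\<integral>\<^sup>+\<omega>. ennreal (S \<omega> ^ 4) \<partial>P) = (\<integral>\<^sup>+y. ennreal (y ^ 4) \<partial>distr P borel S)"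
    by (subst nn_integral_distr) auto
  also have "\<dots> = (\<integral>\<^sup>+y. ennreal (y ^ 4) \<partial>?N)" by (simp add: eq)
  also have "\<dots> = (\<integral>\<^sup>+x. ennreal ((sqrt V * x) ^ 4) \<partial>std_normal_distribution)"
    by (subst nn_integral_distr) auto
  also have "\<dots> = (\<integral>\<^sup>+x. ennreal (V^2 * x ^ (2*2)) \<partial>std_normal_distribution)"
  proof (intro nn_integral_cong)
    fix x
    have "sqrt V ^ 4 = (sqrt V ^ 2) ^ 2" by (simp flip: power_mult)
    also have "\<dots> = V^2" using V0 by simp
    finally show "ennreal ((sqrt V * x) ^ 4) = ennreal (V^2 * x ^ (2*2))"
      by (simp add: power_mult_distrib)
  qed
  also have "\<dots> = ennreal (LINT x|std_normal_distribution. V^2 * x ^ (2*2))"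
    using std_normal_distribution_even_moments(2)[of 2] V0 by (intro nn_integral_eq_integral) auto
  also have "\<dots> = ennreal (3 * V^2)"
    using std_normal_distribution_even_moments(1)[of 2] by (simp add: eval_nat_numeral fact_numeral)
  finally show "(\<integral>\<^sup>+\<omega>. ennreal (S \<omega> ^ 4) \<partial>P) = ennreal (3 * V^2)" .
qed

lemma fbm_char:
  fixes W :: "real \<Rightarrow> 'a \<Rightarrow> real" and I :: "'b set"
  assumes fbm: "is_fbm P H W" and I: "finite I" and s: "\<And>i. i \<in> I \<Longrightarrow> 0 \<le> s i"
  shows "char (distr P borel (\<lambda>\<omega>. \<Sum>i\<in>I. c i * W (s i) \<omega>)) u =
    complex_of_real (exp (- (u^2 * (\<Sum>i\<in>I. \<Sum>j\<in>I. c i * c j * fbm_cov H (s i) (s j))) / 2))"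
proof -
  obtain g where g: "bij_betw g {..<card I} I"
    using ex_bij_betw_nat_finite[OF I] atLeast0LessThan by metis
  define m where "m = card I"
  define ts where "ts = map (s \<circ> g) [0..<m]"
  define as where "as = map (c \<circ> g) [0..<m]"
  have len: "length ts = m" "length as = m" by (auto simp: ts_def as_def)
  have nth: "\<And>i. i < m \<Longrightarrow> ts ! i = s (g i) \<and> as ! i = c (g i)" by (auto simp: ts_def as_def)
  have gI: "\<And>i. i < m \<Longrightarrow> g i \<in> I" using g by (auto simp: m_def bij_betw_def)
  have pos: "\<forall>x\<in>set ts. 0 \<le> x" using gI s by (auto simp: ts_def)
  from fbm have key: "\<forall>u. char (distr P borel (\<lambda>\<omega>. \<Sum>i<length ts. as!i * W (ts!i) \<omega>)) u =
           complex_of_real (exp (- (u^2 * (\<Sum>i<length ts. \<Sum>j<length ts.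
                 as!i * as!j * fbm_cov H (ts!i) (ts!j))) / 2))"
  proof -
    have "\<forall>(ts::real list) (as::real list). length as = length ts \<and> (\<forall>s\<in>set ts. 0 \<le> s) \<longrightarrow>
        (\<forall>u::real. char (distr P borel (\<lambda>\<omega>. \<Sum>i<length ts. as!i * W (ts!i) \<omega>)) u =
           complex_of_real (exp (- (u^2 * (\<Sum>i<length ts. \<Sum>j<length ts.
                 as!i * as!j * fbm_cov H (ts!i) (ts!j))) / 2)))"
      using fbm unfolding is_fbm_def by (elim conjE)
    from this[rule_format, of as ts] show ?thesis using len pos by blast
  qed
  have e1: "(\<lambda>\<omega>. \<Sum>i<length ts. as!i * W (ts!i) \<omega>) = (\<lambda>\<omega>. \<Sum>i\<in>I. c i * W (s i) \<omega>)"
  proof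
    fix \<omega>
    have "(\<Sum>i<length ts. as!i * W (ts!i) \<omega>) = (\<Sum>i<m. c (g i) * W (s (g i)) \<omega>)"
      using len nth by (intro sum.cong) auto
    also have "\<dots> = (\<Sum>i\<in>I. c i * W (s i) \<omega>)"
      using sum.reindex_bij_betw[OF g, of "\<lambda>i. c i * W (s i) \<omega>"] by (simp add: m_def)
    finally show "(\<Sum>i<length ts. as!i * W (ts!i) \<omega>) = (\<Sum>i\<in>I. c i * W (s i) \<omega>)" .
  qed
  have e2: "(\<Sum>i<length ts. \<Sum>j<length ts. as!i * as!j * fbm_cov H (ts!i) (ts!j))
      = (\<Sum>i\<in>I. \<Sum>j\<in>I. c i * c j * fbm_cov H (s i) (s j))"
  proof -
    have "(\<Sum>i<length ts. \<Sum>j<length ts. as!i * as!j * fbm_cov H (ts!i) (ts!j))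
       = (\<Sum>i<m. \<Sum>j<m. c (g i) * c (g j) * fbm_cov H (s (g i)) (s (g j)))"
      using len nth by (intro sum.cong) auto
    also have "\<dots> = (\<Sum>i<m. \<Sum>j\<in>I. c (g i) * c j * fbm_cov H (s (g i)) (s j))"
      using sum.reindex_bij_betw[OF g] by (intro sum.cong) (simp_all add: m_def)
    also have "\<dots> = (\<Sum>i\<in>I. \<Sum>j\<in>I. c i * c j * fbm_cov H (s i) (s j))"
      using sum.reindex_bij_betw[OF g, of "\<lambda>i. \<Sum>j\<in>I. c i * c j * fbm_cov H (s i) (s j)"] by (simp add: m_def)
    finally show ?thesis .
  qed
  from key[rule_format, of u] show ?thesis unfolding e1 e2 .
qed

lemma fbm_psd:
  fixes W :: "real \<Rightarrow> 'a \<Rightarrow> real" and I :: "'b set"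
  assumes P: "prob_space P" and fbm: "is_fbm P H W" and I: "finite I" and s: "\<And>i. i \<in> I \<Longrightarrow> 0 \<le> s i"
  shows "0 \<le> (\<Sum>i\<in>I. \<Sum>j\<in>I. c i * c j * fbm_cov H (s i) (s j))"
proof -
  interpret prob_space P by fact
  have [measurable]: "\<And>t. W t \<in> borel_measurable P" using fbm by (simp add: is_fbm_def)
  have rd: "real_distribution (distr P borel (\<lambda>\<omega>. \<Sum>i\<in>I. c i * W (s i) \<omega>))" by simp
  have "norm (char (distr P borel (\<lambda>\<omega>. \<Sum>i\<in>I. c i * W (s i) \<omega>)) 1) \<le> 1"
    by (rule real_distribution.cmod_char_le_1[OF rd])
  then show ?thesis using fbm_char[OF fbm I s, where c=c and u=1] by simp
qed

definition Gc :: "real \<Rightarrow> real \<Rightarrow> real \<Rightarrow> real \<Rightarrow> real" where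
  "Gc H b p q = fbm_cov H b b - fbm_cov H b q - fbm_cov H p b + fbm_cov H p q"

definition cI :: "('j \<Rightarrow> real) \<Rightarrow> 'j \<times> bool \<Rightarrow> real" where
  "cI d i = (if snd i then d (fst i) else - d (fst i))"
definition sI :: "real \<Rightarrow> ('j \<Rightarrow> real) \<Rightarrow> 'j \<times> bool \<Rightarrow> real" where
  "sI b p i = (if snd i then b else p (fst i))"

lemma sum_bool_prod: "finite J \<Longrightarrow> (\<Sum>i\<in>J \<times> (UNIV::bool set). f i) = (\<Sum>j\<in>J. f (j, True) + f (j, False))"
proof -
  have "(\<Sum>i\<in>J \<times> (UNIV::bool set). f i) = (\<Sum>j\<in>J. \<Sum>\<beta>\<in>(UNIV::bool set). f (j, \<beta>))"
    using sum.cartesian_product[of "\<lambda>j \<beta>. f (j, \<beta>)" "UNIV::bool set" J] by simp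
  then show ?thesis by (simp add: UNIV_bool add.commute)
qed

lemma incr_var_eq:
  assumes "finite J"
  shows "(\<Sum>i\<in>J \<times> UNIV. \<Sum>i'\<in>J \<times> UNIV. cI d i * cI d i' * fbm_cov H (sI b p i) (sI b p i'))
     = (\<Sum>j\<in>J. \<Sum>l\<in>J. d j * d l * Gc H b (p j) (p l))"
  using assms by (simp add: sum_bool_prod cI_def sI_def Gc_def sum.distrib[symmetric] algebra_simps sum_subtractf[symmetric])

lemma incr_sum_eq:
  assumes "finite J"
  shows "(\<Sum>i\<in>J \<times> UNIV. cI d i * W (sI b p i) \<omega>) = (\<Sum>j\<in>J. d j * (W b \<omega> - W (p j) \<omega>))"
  using assms by (simp add: sum_bool_prod cI_def sI_def algebra_simps)

lemma fbm_incr_char: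
  fixes W :: "real \<Rightarrow> 'a \<Rightarrow> real"
  assumes fbm: "is_fbm P H W" and J: "finite J" and b: "0 \<le> b" and p: "\<And>j. j \<in> J \<Longrightarrow> 0 \<le> p j"
  shows "char (distr P borel (\<lambda>\<omega>. \<Sum>j\<in>J. d j * (W b \<omega> - W (p j) \<omega>))) u =
    complex_of_real (exp (- (u^2 * (\<Sum>j\<in>J. \<Sum>l\<in>J. d j * d l * Gc H b (p j) (p l))) / 2))"
proof -
  have s: "\<And>i. i \<in> J \<times> UNIV \<Longrightarrow> 0 \<le> sI b p i" using b p by (auto simp: sI_def)
  have "char (distr P borel (\<lambda>\<omega>. \<Sum>i\<in>J \<times> UNIV. cI d i * W (sI b p i) \<omega>)) u =
    complex_of_real (exp (- (u^2 * (\<Sum>i\<in>J \<times> UNIV. \<Sum>i'\<in>J \<times> UNIV. cI d i * cI d i' * fbm_cov H (sI b p i) (sI b p i'))) / 2))"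
    by (rule fbm_char[OF fbm]) (use J s in auto)
  then show ?thesis using J
    by (simp add: incr_var_eq incr_sum_eq)
qed

lemma fbm_incr_psd:
  fixes W :: "real \<Rightarrow> 'a \<Rightarrow> real"
  assumes P: "prob_space P" and fbm: "is_fbm P H W" and J: "finite J" and b: "0 \<le> b" and p: "\<And>j. j \<in> J \<Longrightarrow> 0 \<le> p j"
  shows "0 \<le> (\<Sum>j\<in>J. \<Sum>l\<in>J. d j * d l * Gc H b (p j) (p l))"
proof -
  have s: "\<And>i. i \<in> J \<times> UNIV \<Longrightarrow> 0 \<le> sI b p i" using b p by (auto simp: sI_def)
  have "0 \<le> (\<Sum>i\<in>J \<times> UNIV. \<Sum>i'\<in>J \<times> UNIV. cI d i * cI d i' * fbm_cov H (sI b p i) (sI b p i'))"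
    by (rule fbm_psd[OF P fbm]) (use J s in auto)
  then show ?thesis using J
    by (simp add: incr_var_eq)
qed

lemma fbm_cov_sym: "fbm_cov H s t = fbm_cov H t s"
  by (simp add: fbm_cov_def abs_minus_commute add.commute)

lemma Gc_diag: "0 \<le> b \<Longrightarrow> 0 \<le> p \<Longrightarrow> Gc H b p p = \<bar>b - p\<bar> powr (2*H)"
  by (simp add: Gc_def fbm_cov_def abs_minus_commute field_simps)

lemma quad_cs:
  fixes A B C :: real
  assumes "\<And>x y. 0 \<le> x^2 * A + 2 * x * y * B + y^2 * C"
  shows "B^2 \<le> A * C"
proof (cases "C = 0")
  case True
  have "B = 0"
  proof (rule ccontr)
    assume "B \<noteq> 0"
    have "0 \<le> 1^2 * A + 2 * 1 * (- (A + 1) / (2 * B)) * B + (- (A + 1) / (2 * B))^2 * C" by (rule assms)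
    with \<open>B \<noteq> 0\<close> True show False by (simp add: field_simps)
  qed
  then show ?thesis using assms[of 1 0] True by simp
next
  case False
  have C0: "0 \<le> C" using assms[of 0 1] by simp
  with False have "0 < C" by simp
  have "0 \<le> C^2 * A + 2 * C * (-B) * B + (-B)^2 * C" by (rule assms)
  then have "0 \<le> C * (A * C - B^2)" by (simp add: algebra_simps power2_eq_square)
  with \<open>0 < C\<close> show ?thesis by (simp add: zero_le_mult_iff)
qed

lemma Gc_cs:
  fixes W :: "real \<Rightarrow> 'a \<Rightarrow> real"
  assumes P: "prob_space P" and fbm: "is_fbm P H W" and b: "0 \<le> b" and p: "0 \<le> p" and q: "0 \<le> q"
  shows "\<bar>Gc H b p q\<bar> \<le> \<bar>b - p\<bar> powr H * \<bar>b - q\<bar> powr H"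
proof -
  have sym: "Gc H b q p = Gc H b p q" by (simp add: Gc_def fbm_cov_sym)
  have "(Gc H b p q)^2 \<le> Gc H b p p * Gc H b q q"
  proof (rule quad_cs)
    fix x y :: real
    have "0 \<le> (\<Sum>j\<in>{0::nat,1}. \<Sum>l\<in>{0::nat,1}. (\<lambda>j. if j = 0 then x else y) j * (\<lambda>j. if j = 0 then x else y) l
       * Gc H b ((\<lambda>j. if j = 0 then p else q) j) ((\<lambda>j. if j = 0 then p else q) l))"
      by (rule fbm_incr_psd[OF P fbm _ b]) (use p q in auto)
    then show "0 \<le> x\<^sup>2 * Gc H b p p + 2 * x * y * Gc H b p q + y\<^sup>2 * Gc H b q q"
      by (simp add: sym power2_eq_square algebra_simps)
  qed
  also have "\<dots> = (\<bar>b - p\<bar> powr H * \<bar>b - q\<bar> powr H)^2"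
  proof -
    have e: "\<And>x::real. \<bar>x\<bar> powr (2*H) = \<bar>x\<bar> powr H * \<bar>x\<bar> powr H"
      by (simp add: powr_add[symmetric])
    show ?thesis using b p q by (simp add: Gc_diag e power2_eq_square)
  qed
  finally have "\<bar>Gc H b p q\<bar> \<le> \<bar>\<bar>b - p\<bar> powr H * \<bar>b - q\<bar> powr H\<bar>"
    by (simp only: abs_le_square_iff)
  then show ?thesis by simp
qed

lemma var_bound:
  fixes W :: "real \<Rightarrow> 'a \<Rightarrow> real"
  assumes P: "prob_space P" and fbm: "is_fbm P H W" and J: "finite J" and b: "0 \<le> b" and p: "\<And>j. j \<in> J \<Longrightarrow> 0 \<le> p j"
  shows "(\<Sum>j\<in>J. \<Sum>l\<in>J. d j * d l * Gc H b (p j) (p l)) \<le> (\<Sum>j\<in>J. \<bar>d j\<bar> * \<bar>b - p j\<bar> powr H)^2"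
proof -
  have "(\<Sum>j\<in>J. \<Sum>l\<in>J. d j * d l * Gc H b (p j) (p l)) \<le>
      (\<Sum>j\<in>J. \<Sum>l\<in>J. (\<bar>d j\<bar> * \<bar>b - p j\<bar> powr H) * (\<bar>d l\<bar> * \<bar>b - p l\<bar> powr H))"
  proof (intro sum_mono)
    fix j l assume jl: "j \<in> J" "l \<in> J"
    have "d j * d l * Gc H b (p j) (p l) \<le> \<bar>d j * d l\<bar> * \<bar>Gc H b (p j) (p l)\<bar>"
      by (metis abs_ge_self abs_mult)
    also have "\<dots> \<le> \<bar>d j * d l\<bar> * (\<bar>b - p j\<bar> powr H * \<bar>b - p l\<bar> powr H)"
      by (intro mult_left_mono Gc_cs[OF P fbm b]) (use p jl in auto)
    finally show "d j * d l * Gc H b (p j) (p l) \<le> (\<bar>d j\<bar> * \<bar>b - p j\<bar> powr H) * (\<bar>d l\<bar> * \<bar>b - p l\<bar> powr H)"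
      by (simp add: abs_mult algebra_simps)
  qed
  also have "\<dots> = (\<Sum>j\<in>J. \<bar>d j\<bar> * \<bar>b - p j\<bar> powr H)^2"
    by (simp add: power2_eq_square sum_product)
  finally show ?thesis .
qed

lemma integral_split_n:
  fixes g :: "real \<Rightarrow> real"
  assumes "continuous_on {a..a + real n * \<Delta>} g" "0 \<le> \<Delta>"
  shows "integral {a..a + real n * \<Delta>} g = (\<Sum>i<n. integral {a + real i * \<Delta>..a + real (Suc i) * \<Delta>} g)"
  using assms(1)
proof (induction n)
  case 0
  then show ?case by simp
next
  case (Suc n)
  have c: "continuous_on {a..a + real n * \<Delta>} g"
    by (rule continuous_on_subset[OF Suc.prems]) (use assms(2) in \<open>auto simp: algebra_simps\<close>)
  have "integral {a..a + real n * \<Delta>} g + integral {a + real n * \<Delta>..a + real (Suc n) * \<Delta>} g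
      = integral {a..a + real (Suc n) * \<Delta>} g"
    by (rule Henstock_Kurzweil_Integration.integral_combine)
       (use assms(2) integrable_continuous_interval[OF Suc.prems] in \<open>auto simp: algebra_simps\<close>)
  then show ?case using Suc.IH[OF c] by simp
qed

lemma riemann_sum:
  fixes g :: "real \<Rightarrow> real"
  assumes cont: "continuous_on {a..b} g" and ab: "a \<le> b"
  shows "(\<lambda>n. \<Sum>i<n. (b - a) / real n * g (a + real i * ((b - a) / real n))) \<longlonglongrightarrow> integral {a..b} g"
proof (cases "a = b")
  case True
  then show ?thesis by simp
next
  case False
  with ab have ab': "a < b" by simp
  show ?thesis
  proof (rule LIMSEQ_I)
    fix e :: real assume e: "0 < e"
    define e' where "e' = e / (2 * (b - a))"
    have e'0: "0 < e'" using e ab' by (simp add: e'_def)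
    have uc: "uniformly_continuous_on {a..b} g"
      by (rule compact_uniformly_continuous[OF cont]) simp
    then obtain d where d: "0 < d" and dd: "\<And>x x'. x \<in> {a..b} \<Longrightarrow> x' \<in> {a..b} \<Longrightarrow> dist x' x < d \<Longrightarrow> dist (g x') (g x) < e'"
      unfolding uniformly_continuous_on_def using e'0 by metis
    obtain N :: nat where N: "(b - a) / d < real N" using reals_Archimedean2 by blast
    have "\<forall>n\<ge>Suc N. norm ((\<Sum>i<n. (b - a) / real n * g (a + real i * ((b - a) / real n))) - integral {a..b} g) < e"
    proof (intro allI impI)
      fix n assume n: "Suc N \<le> n"
      define \<Delta> where "\<Delta> = (b - a) / real n"
      have n0: "0 < real n" using n by simp
      have \<Delta>0: "0 < \<Delta>" using ab' n0 by (simp add: \<Delta>_def)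
      have bn: "b = a + real n * \<Delta>" using n0 by (simp add: \<Delta>_def)
      have "(b - a) / d < real n" using N n by linarith
      then have \<Delta>d: "\<Delta> < d" using d n0 by (simp add: \<Delta>_def field_simps)
      have split: "integral {a..b} g = (\<Sum>i<n. integral {a + real i * \<Delta>..a + real (Suc i) * \<Delta>} g)"
        using integral_split_n[of a n \<Delta> g] cont \<Delta>0 bn by simp
      have each: "\<bar>\<Delta> * g (a + real i * \<Delta>) - integral {a + real i * \<Delta>..a + real (Suc i) * \<Delta>} g\<bar> \<le> e' * \<Delta>"
        if i: "i < n" for i
      proof -
        define c where "c = a + real i * \<Delta>"
        have cS: "a + real (Suc i) * \<Delta> = c + \<Delta>" by (simp add: c_def algebra_simps)
        have sub: "{c..c+\<Delta>} \<subseteq> {a..b}"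
        proof -
          have "real (Suc i) \<le> real n" using i by simp
          then have "real (Suc i) * \<Delta> \<le> real n * \<Delta>" using \<Delta>0 by (intro mult_right_mono) auto
          then show ?thesis using \<Delta>0 bn cS by (auto simp: c_def algebra_simps)
        qed
        have cab: "c \<in> {a..b}" using sub \<Delta>0 by auto
        have ci: "g integrable_on {c..c+\<Delta>}"
          by (rule integrable_continuous_interval, rule continuous_on_subset[OF cont sub])
        have "((\<lambda>s. g s - g c) has_integral (integral {c..c+\<Delta>} g - \<Delta> * g c)) {c..c+\<Delta>}"
          using has_integral_diff[OF integrable_integral[OF ci] has_integral_const_real[of "g c" c "c+\<Delta>"]] \<Delta>0
          by (simp add: content_real algebra_simps)
        note hi = this
        have B: "\<And>x. x \<in> {c..c+\<Delta>} - {} \<Longrightarrow> norm (g x - g c) \<le> e'"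
        proof -
          fix x assume "x \<in> {c..c+\<Delta>} - {}"
          then have x: "x \<in> {a..b}" "dist x c < d" using sub \<Delta>d by (auto simp: dist_real_def)
          show "norm (g x - g c) \<le> e'" using dd[OF cab x] by (simp add: dist_real_def)
        qed
        have "norm (integral {c..c+\<Delta>} g - \<Delta> * g c) \<le> e' * \<Delta>"
          using has_integral_bound_real[OF _ finite.emptyI hi B] e'0 \<Delta>0 by simp
        then show ?thesis using \<Delta>0 cS by (simp add: c_def abs_minus_commute add.assoc)
      qed
      have "norm ((\<Sum>i<n. (b - a) / real n * g (a + real i * ((b - a) / real n))) - integral {a..b} g)
          = \<bar>\<Sum>i<n. (\<Delta> * g (a + real i * \<Delta>) - integral {a + real i * \<Delta>..a + real (Suc i) * \<Delta>} g)\<bar>"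
        by (simp add: split sum_subtractf \<Delta>_def)
      also have "\<dots> \<le> (\<Sum>i<n. \<bar>\<Delta> * g (a + real i * \<Delta>) - integral {a + real i * \<Delta>..a + real (Suc i) * \<Delta>} g\<bar>)"
        by (rule sum_abs)
      also have "\<dots> \<le> (\<Sum>i<n. e' * \<Delta>)" by (intro sum_mono each) simp
      also have "\<dots> = e / 2" using n0 ab' by (simp add: e'_def \<Delta>_def field_simps)
      also have "\<dots> < e" using e by simp
      finally show "norm ((\<Sum>i<n. (b - a) / real n * g (a + real i * ((b - a) / real n))) - integral {a..b} g) < e" .
    qed
    then show "\<exists>no. \<forall>n\<ge>no. norm ((\<Sum>i<n. (b - a) / real n * g (a + real i * ((b - a) / real n))) - integral {a..b} g) < e"
      by blast
  qed
qed

definition fA :: "real \<Rightarrow> real \<Rightarrow> real \<Rightarrow> real \<Rightarrow> real" where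
  "fA A l b s = A * exp (- l * (b - s))"

definition pp :: "real \<Rightarrow> real \<Rightarrow> nat \<Rightarrow> nat \<Rightarrow> real" where
  "pp a b n j = (if j = 0 then a else a + real (j - 1) * ((b - a) / real n))"

definition dd :: "real \<Rightarrow> real \<Rightarrow> real \<Rightarrow> real \<Rightarrow> nat \<Rightarrow> nat \<Rightarrow> real" where
  "dd A l a b n j = (if j = 0 then fA A l b a else (b - a) / real n * (l * fA A l b (a + real (j - 1) * ((b - a) / real n))))"

lemma fA_deriv: "((fA A l b) has_real_derivative (l * fA A l b s)) (at s)"
  unfolding fA_def by (auto intro!: derivative_eq_intros)

lemma deriv_fA: "deriv (fA A l b) s = l * fA A l b s"
  by (rule DERIV_imp_deriv[OF fA_deriv])

lemma cont_fA: "continuous_on S (fA A l b)"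
  unfolding fA_def by (intro continuous_intros)

lemma wint_form:
  fixes w :: "real \<Rightarrow> real"
  assumes ab: "a \<le> b" and cw: "continuous_on {a..b} w" and that: "f = fA A l bb"
  shows "f b * w b - f a * w a - integral {a..b} (\<lambda>s. deriv f s * w s)
     = f a * (w b - w a) + integral {a..b} (\<lambda>s. l * f s * (w b - w s))"
proof -
  have ftc: "((\<lambda>s. l * f s) has_integral (f b - f a)) {a..b}"
    using that by (intro fundamental_theorem_of_calculus[OF ab])
      (auto simp: has_real_derivative_iff_has_vector_derivative[symmetric]
            intro: has_field_derivative_at_within fA_deriv)
  have cf: "continuous_on {a..b} f" using that cont_fA by simp
  have i1: "(\<lambda>s. l * f s * w s) integrable_on {a..b}"
    by (intro integrable_continuous_interval continuous_intros cf cw)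
  have i2: "(\<lambda>s. l * f s * w b) integrable_on {a..b}"
    by (intro integrable_continuous_interval continuous_intros cf cw)
  have "integral {a..b} (\<lambda>s. l * f s * (w b - w s)) = integral {a..b} (\<lambda>s. l * f s * w b - l * f s * w s)"
    by (simp add: algebra_simps)
  also have "\<dots> = integral {a..b} (\<lambda>s. l * f s * w b) - integral {a..b} (\<lambda>s. l * f s * w s)"
    by (rule integral_diff[OF i2 i1])
  also have "integral {a..b} (\<lambda>s. l * f s * w b) = (f b - f a) * w b"
  proof -
    have "integral {a..b} (\<lambda>s. l * f s * w b) = integral {a..b} (\<lambda>s. l * f s) * w b"
      by (rule integral_mult_left)
    then show ?thesis using integral_unique[OF ftc] by simp
  qed
  finally show ?thesis using that by (simp add: deriv_fA algebra_simps)
qed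

lemma wint_lim:
  fixes W :: "real \<Rightarrow> 'a \<Rightarrow> real"
  assumes ab: "0 \<le> a" "a \<le> b" and cw: "continuous_on {0..} (\<lambda>t. W t \<omega>)"
  shows "(\<lambda>n. \<Sum>j<Suc n. dd A l a b n j * (W b \<omega> - W (pp a b n j) \<omega>)) \<longlonglongrightarrow> wint (fA A l b) a b W \<omega>"
proof -
  have cw': "continuous_on {a..b} (\<lambda>t. W t \<omega>)" by (rule continuous_on_subset[OF cw]) (use ab in auto)
  define g where "g = (\<lambda>s. l * fA A l b s * (W b \<omega> - W s \<omega>))"
  have cg: "continuous_on {a..b} g" unfolding g_def
    by (intro continuous_intros cont_fA cw')
  have eq: "wint (fA A l b) a b W \<omega> = fA A l b a * (W b \<omega> - W a \<omega>) + integral {a..b} g"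
    unfolding wint_def g_def by (rule wint_form[OF ab(2) cw']) simp
  have sq: "(\<Sum>j<Suc n. dd A l a b n j * (W b \<omega> - W (pp a b n j) \<omega>)) =
     fA A l b a * (W b \<omega> - W a \<omega>) + (\<Sum>i<n. (b - a) / real n * g (a + real i * ((b - a) / real n)))" for n
    unfolding sum.lessThan_Suc_shift by (simp add: dd_def pp_def g_def mult.assoc)
  show ?thesis unfolding sq eq
    by (intro tendsto_add tendsto_const riemann_sum[OF cg ab(2)])
qed

lemma phi_meas[measurable]: "phi k \<in> borel_measurable borel"
  unfolding phi_def by measurable

lemma phi_sq: "(phi k x)^2 \<le> 2"
proof -
  have "(sin (real k * pi * x))^2 \<le> 1" by (simp add: abs_square_le_1)
  then show ?thesis by (simp add: phi_def power_mult_distrib)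
qed

lemma pp_nonneg: "0 \<le> a \<Longrightarrow> a \<le> b \<Longrightarrow> 0 \<le> pp a b n j"
  by (auto simp: pp_def)

lemma main_bound:
  fixes P :: "'a measure" and W :: "nat \<Rightarrow> real \<Rightarrow> 'a \<Rightarrow> real"
  assumes P: "prob_space P" and fbm: "\<And>k. is_fbm P H (W k)"
    and ind: "prob_space.indep_vars P (\<lambda>_. Pi\<^sub>M UNIV (\<lambda>_. borel)) (\<lambda>k \<omega> t. W k t \<omega>) UNIV"
    and ab: "0 \<le> a" "a \<le> b"
    and Bk: "\<And>k n. k \<in> {1..N} \<Longrightarrow> (\<Sum>j<Suc n. \<bar>dd (A k) (l k) a b n j\<bar> * \<bar>b - pp a b n j\<bar> powr H) \<le> B k"
  shows "(\<integral>\<^sup>+\<omega>. ennreal (L4pow4 (\<lambda>x. \<Sum>k=1..N. wint (fA (A k) (l k) b) a b (W k) \<omega> * phi k x)) \<partial>P)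
     \<le> ennreal (12 * (\<Sum>k=1..N. (B k)^2)^2)"
proof -
  interpret prob_space P by fact
  have Wm[measurable]: "\<And>k t. W k t \<in> borel_measurable P" using fbm by (simp add: is_fbm_def)
  have cont: "\<And>k \<omega>. \<omega> \<in> space P \<Longrightarrow> continuous_on {0..} (\<lambda>t. W k t \<omega>)" using fbm by (simp add: is_fbm_def)
  define R where "R n k \<omega> = (\<Sum>j<Suc n. dd (A k) (l k) a b n j * (W k b \<omega> - W k (pp a b n j) \<omega>))" for n k \<omega>
  define X where "X k \<omega> = wint (fA (A k) (l k) b) a b (W k) \<omega>" for k \<omega>
  have lim: "\<And>k \<omega>. \<omega> \<in> space P \<Longrightarrow> (\<lambda>n. R n k \<omega>) \<longlonglongrightarrow> X k \<omega>"
    unfolding R_def X_def by (rule wint_lim[OF ab cont])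
  have Rm[measurable]: "\<And>n k. R n k \<in> borel_measurable P" unfolding R_def by measurable
  have Xm[measurable]: "\<And>k. X k \<in> borel_measurable P"
    by (rule borel_measurable_LIMSEQ_real[OF lim Rm])
  define C' where "C' = 12 * (\<Sum>k=1..N. (B k)^2)^2"
  define Th where "Th x \<omega> = (\<Sum>k=1..N. X k \<omega> * phi k x)" for x \<omega>
  have Thm[measurable]: "(\<lambda>(x, \<omega>). Th x \<omega>) \<in> borel_measurable (lborel \<Otimes>\<^sub>M P)"
    unfolding Th_def by measurable
  have B0: "\<And>k. k \<in> {1..N} \<Longrightarrow> 0 \<le> B k"
    using Bk[of _ 0] by (meson order_trans sum_nonneg abs_ge_zero mult_nonneg_nonneg powr_ge_zero)
  have approx: "(\<integral>\<^sup>+\<omega>. ennreal ((\<Sum>k=1..N. R n k \<omega> * phi k x) ^ 4) \<partial>P) \<le> ennreal C'" for n x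
  proof -
    define c where "c k j = phi k x * dd (A k) (l k) a b n j" for k j
    define F where "F k w = (\<Sum>j<Suc n. c k j * (w b - w (pp a b n j)))" for k and w :: "real \<Rightarrow> real"
    define Y where "Y k \<omega> = F k (\<lambda>t. W k t \<omega>)" for k \<omega>
    define Vk where "Vk k = (\<Sum>j<Suc n. \<Sum>i<Suc n. c k j * c k i * Gc H b (pp a b n j) (pp a b n i))" for k
    define V where "V = (\<Sum>k\<in>{1..N}. Vk k)"
    have Fm: "F k \<in> borel_measurable (Pi\<^sub>M UNIV (\<lambda>_. borel))" for k
      unfolding F_def by measurable
    have indY: "indep_vars (\<lambda>_. borel) Y UNIV"
      unfolding Y_def by (rule indep_vars_compose2[OF ind Fm])
    then have indY': "indep_vars (\<lambda>_. borel) Y {1..N}"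
      by (rule indep_vars_subset) simp
    have Ym[measurable]: "\<And>k. Y k \<in> borel_measurable P" unfolding Y_def F_def by measurable
    have SY: "(\<lambda>\<omega>. \<Sum>k=1..N. R n k \<omega> * phi k x) = (\<lambda>\<omega>. \<Sum>k\<in>{1..N}. Y k \<omega>)"
      unfolding R_def Y_def F_def c_def sum_distrib_right by (intro ext sum.cong refl) (simp add: mult_ac)
    have chY: "char (distr P borel (Y k)) u = complex_of_real (exp (- (u^2 * Vk k) / 2))" for k u
      unfolding Y_def F_def Vk_def
      by (rule fbm_incr_char[OF fbm]) (use ab pp_nonneg in auto)
    have ch: "char (distr P borel (\<lambda>\<omega>. \<Sum>k=1..N. R n k \<omega> * phi k x)) u = complex_of_real (exp (- (u^2 * V) / 2))" for u
    proof -
      have "char (distr P borel (\<lambda>\<omega>. \<Sum>k\<in>{1..N}. Y k \<omega>)) u = (\<Prod>k\<in>{1..N}. char (distr P borel (Y k)) u)"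
        by (rule char_distr_sum[OF indY'])
      also have "\<dots> = (\<Prod>k\<in>{1..N}. complex_of_real (exp (- (u^2 * Vk k) / 2)))" by (simp add: chY)
      also have "\<dots> = complex_of_real (exp (\<Sum>k\<in>{1..N}. - (u^2 * Vk k) / 2))"
        by (simp add: exp_sum of_real_prod)
      also have "(\<Sum>k\<in>{1..N}. - (u^2 * Vk k) / 2) = - (u^2 * V) / 2"
        by (simp add: V_def sum_distrib_left sum_divide_distrib[symmetric] sum_negf)
      finally show ?thesis unfolding SY .
    qed
    have g: "V \<ge> 0" "(\<integral>\<^sup>+\<omega>. ennreal ((\<Sum>k=1..N. R n k \<omega> * phi k x) ^ 4) \<partial>P) = ennreal (3 * V^2)"
      by (rule gauss4[OF P _ ch], simp)+
    have Vk_le: "Vk k \<le> 2 * (B k)^2" if k: "k \<in> {1..N}" for k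
    proof -
      have "Vk k \<le> (\<Sum>j<Suc n. \<bar>c k j\<bar> * \<bar>b - pp a b n j\<bar> powr H)^2"
        unfolding Vk_def by (rule var_bound[OF P fbm]) (use ab pp_nonneg in auto)
      also have "\<dots> = (phi k x)^2 * (\<Sum>j<Suc n. \<bar>dd (A k) (l k) a b n j\<bar> * \<bar>b - pp a b n j\<bar> powr H)^2"
        by (simp add: c_def abs_mult sum_distrib_left[symmetric] mult.assoc power_mult_distrib)
      also have "\<dots> \<le> 2 * (B k)^2"
        by (intro mult_mono phi_sq power_mono Bk k) (auto intro!: sum_nonneg simp del: sum.lessThan_Suc)
      finally show ?thesis .
    qed
    have "V \<le> 2 * (\<Sum>k=1..N. (B k)^2)"
      unfolding V_def sum_distrib_left by (intro sum_mono Vk_le)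
    then have "V^2 \<le> (2 * (\<Sum>k=1..N. (B k)^2))^2" using g(1) by (intro power_mono) auto
    then have "3 * V^2 \<le> C'" by (simp add: C'_def power_mult_distrib)
    then show ?thesis using g(2) by (simp add: ennreal_leI)
  qed
  have perx: "(\<integral>\<^sup>+\<omega>. ennreal ((Th x \<omega>) ^ 4) \<partial>P) \<le> ennreal C'" for x
  proof -
    have conv: "(\<lambda>n. ennreal ((\<Sum>k=1..N. R n k \<omega> * phi k x) ^ 4)) \<longlonglongrightarrow> ennreal ((Th x \<omega>) ^ 4)"
      if "\<omega> \<in> space P" for \<omega>
      unfolding Th_def
      by (intro tendsto_ennrealI tendsto_power tendsto_sum tendsto_mult_right lim that)
    have "(\<integral>\<^sup>+\<omega>. ennreal ((Th x \<omega>) ^ 4) \<partial>P) = (\<integral>\<^sup>+\<omega>. liminf (\<lambda>n. ennreal ((\<Sum>k=1..N. R n k \<omega> * phi k x) ^ 4)) \<partial>P)"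
    proof (intro nn_integral_cong)
      fix \<omega> assume "\<omega> \<in> space P"
      show "ennreal ((Th x \<omega>) ^ 4) = liminf (\<lambda>n. ennreal ((\<Sum>k=1..N. R n k \<omega> * phi k x) ^ 4))"
        by (rule sym, rule lim_imp_Liminf[OF _ conv[OF \<open>\<omega> \<in> space P\<close>]]) simp
    qed
    also have "\<dots> \<le> liminf (\<lambda>n. \<integral>\<^sup>+\<omega>. ennreal ((\<Sum>k=1..N. R n k \<omega> * phi k x) ^ 4) \<partial>P)"
      by (rule nn_integral_liminf) measurable
    also have "\<dots> \<le> limsup (\<lambda>n. \<integral>\<^sup>+\<omega>. ennreal ((\<Sum>k=1..N. R n k \<omega> * phi k x) ^ 4) \<partial>P)"
      by (rule Liminf_le_Limsup) simp
    also have "\<dots> \<le> ennreal C'"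
      by (rule Limsup_bounded) (use approx in auto)
    finally show ?thesis .
  qed
  interpret Q: pair_sigma_finite lborel P ..
  have L4: "ennreal (L4pow4 (\<lambda>x. \<Sum>k=1..N. wint (fA (A k) (l k) b) a b (W k) \<omega> * phi k x))
      = (\<integral>\<^sup>+x. ennreal (indicator {0..1} x * (Th x \<omega>)^4) \<partial>lborel)" for \<omega>
  proof -
    have c: "continuous_on {0..1} (\<lambda>x. (Th x \<omega>)^4)"
      unfolding Th_def phi_def by (intro continuous_intros)
    have "((\<lambda>x. (Th x \<omega>)^4) has_integral integral {0..1} (\<lambda>x. (Th x \<omega>)^4)) {0..1}"
      using integrable_continuous_interval[OF c] by (rule integrable_integral)
    from nn_integral_has_integral_lebesgue[OF _ this]
    show ?thesis by (simp add: L4pow4_def Th_def X_def)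
  qed
  have "(\<integral>\<^sup>+\<omega>. ennreal (L4pow4 (\<lambda>x. \<Sum>k=1..N. wint (fA (A k) (l k) b) a b (W k) \<omega> * phi k x)) \<partial>P)
     = (\<integral>\<^sup>+\<omega>. (\<integral>\<^sup>+x. ennreal (indicator {0..1} x * (Th x \<omega>)^4) \<partial>lborel) \<partial>P)"
    by (rule nn_integral_cong) (rule L4)
  also have "\<dots> = (\<integral>\<^sup>+x. (\<integral>\<^sup>+\<omega>. ennreal (indicator {0..1} x * (Th x \<omega>)^4) \<partial>P) \<partial>lborel)"
    by (rule Q.Fubini') measurable
  also have "\<dots> \<le> (\<integral>\<^sup>+x. ennreal (indicator {0..1::real} x * C') \<partial>lborel)"
  proof (intro nn_integral_mono)
    fix x
    show "(\<integral>\<^sup>+\<omega>. ennreal (indicator {0..1} x * (Th x \<omega>)^4) \<partial>P) \<le> ennreal (indicator {0..1} x * C')"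
      using perx[of x] by (cases "x \<in> {0..1}") auto
  qed
  also have "\<dots> = ennreal C'"
  proof -
    have "(\<lambda>x. ennreal (indicator {0..1::real} x * C')) = (\<lambda>x. ennreal C' * indicator {0..1} x)"
      by (auto split: split_indicator)
    then show ?thesis by (simp add: nn_integral_cmult_indicator)
  qed
  finally show ?thesis by (simp add: C'_def)
qed

lemma powr_exp_le1:
  fixes x \<gamma> :: real
  assumes x: "0 \<le> x" and g: "0 \<le> \<gamma>" "\<gamma> \<le> 1"
  shows "x powr \<gamma> * exp (- x) \<le> 1"
proof (cases "x \<le> 1")
  case True
  have "x powr \<gamma> \<le> 1"
  proof (cases "x = 0")
    case x0: False
    then have "ln x \<le> 0" using x True by simp
    then have "\<gamma> * ln x \<le> 0" using g by (simp add: mult_nonneg_nonpos)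
    then show ?thesis using x0 x by (simp add: powr_def)
  qed simp
  moreover have "exp (- x) \<le> 1" using x by simp
  ultimately show ?thesis using x by (simp add: mult_le_one)
next
  case False
  then have "x powr \<gamma> \<le> x powr 1" using g by (intro powr_mono) auto
  then have "x powr \<gamma> \<le> x" using False by simp
  moreover have "x \<le> exp x" using exp_ge_add_one_self[of x] by linarith
  ultimately have "x powr \<gamma> \<le> exp x" by linarith
  then show ?thesis by (simp add: exp_minus field_simps)
qed

lemma powr_exp_half:
  fixes x \<gamma> :: real
  assumes x: "0 \<le> x" and g: "0 \<le> \<gamma>" "\<gamma> \<le> 1"
  shows "x powr \<gamma> * exp (- x / 2) \<le> 2"
proof -
  have "(x/2) powr \<gamma> * exp (- (x/2)) \<le> 1" by (rule powr_exp_le1) (use x g in auto)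
  moreover have "x powr \<gamma> = 2 powr \<gamma> * (x/2) powr \<gamma>" using x by (simp add: powr_mult[symmetric])
  moreover have "2 powr \<gamma> \<le> 2 powr (1::real)" using g by (intro powr_mono) auto
  ultimately have "2 powr \<gamma> * ((x/2) powr \<gamma> * exp (- (x/2))) \<le> 2 * 1"
    by (intro mult_mono) auto
  then show ?thesis using \<open>x powr \<gamma> = _\<close> by (simp add: mult.assoc)
qed

lemma geo_bound:
  fixes u :: real
  assumes u: "0 < u"
  shows "(\<Sum>i<n. exp (- u * (real n - real i))) \<le> 1 / u"
proof (induction n)
  case 0
  then show ?case using u by simp
next
  case (Suc n)
  have "(\<Sum>i<Suc n. exp (- u * (real (Suc n) - real i))) = exp (- u) * ((\<Sum>i<n. exp (- u * (real n - real i))) + 1)"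
    by (simp add: sum_distrib_left exp_add[symmetric] algebra_simps)
  also have "\<dots> \<le> exp (- u) * (1 / u + 1)" using Suc.IH by (intro mult_left_mono) auto
  also have "\<dots> = (exp (- u) * (1 + u)) / u" using u by (simp add: field_simps)
  also have "\<dots> \<le> 1 / u"
  proof -
    have "1 + u \<le> exp u" by (rule exp_ge_add_one_self)
    then have "exp (- u) * (1 + u) \<le> 1" by (simp add: exp_minus field_simps)
    then show ?thesis using u by (intro divide_right_mono) auto
  qed
  finally show ?case .
qed

lemma term_bound:
  fixes l y \<gamma> :: real
  assumes l: "0 < l" and y: "0 \<le> y" and g: "0 \<le> \<gamma>" "\<gamma> \<le> 1"
  shows "exp (- l * y) * y powr \<gamma> \<le> l powr (- \<gamma>)"
    and "exp (- l * y) * y powr \<gamma> \<le> 2 * l powr (- \<gamma>) * exp (- l * y / 2)"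
proof -
  have e: "y powr \<gamma> = l powr (- \<gamma>) * (l * y) powr \<gamma>"
    using l y by (simp add: powr_mult powr_minus field_simps)
  have lp: "0 < l powr (- \<gamma>)" using l by simp
  have "(l * y) powr \<gamma> * exp (- (l * y)) \<le> 1" by (rule powr_exp_le1) (use l y g in auto)
  then show "exp (- l * y) * y powr \<gamma> \<le> l powr (- \<gamma>)"
    unfolding e using lp by (simp add: mult_le_cancel_left1 mult.left_commute mult.commute)
  have "(l * y) powr \<gamma> * exp (- (l * y) / 2) \<le> 2" by (rule powr_exp_half) (use l y g in auto)
  then have "(l * y) powr \<gamma> * exp (- (l * y) / 2) * exp (- l * y / 2) \<le> 2 * exp (- l * y / 2)"
    by (intro mult_right_mono) auto
  moreover have "exp (- (l * y) / 2) * exp (- l * y / 2) = exp (- l * y)"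
  proof -
    have "- (l * y) / 2 + - l * y / 2 = - l * y" by simp
    then show ?thesis by (metis exp_add)
  qed
  ultimately have "(l * y) powr \<gamma> * exp (- l * y) \<le> 2 * exp (- l * y / 2)"
    by (metis mult.assoc)
  then have "l powr (- \<gamma>) * ((l * y) powr \<gamma> * exp (- l * y)) \<le> l powr (- \<gamma>) * (2 * exp (- l * y / 2))"
    using lp by (intro mult_left_mono) auto
  then show "exp (- l * y) * y powr \<gamma> \<le> 2 * l powr (- \<gamma>) * exp (- l * y / 2)"
    unfolding e by (simp add: mult_ac)
qed

lemma riemann_exp_bound:
  fixes l a b M \<gamma> :: real
  assumes l: "0 < l" and ab: "a \<le> b" and g: "0 \<le> \<gamma>" "\<gamma> \<le> 1" and M: "0 \<le> M"
    and HM: "\<And>y. 0 \<le> y \<Longrightarrow> y \<le> b - a \<Longrightarrow> y powr H \<le> M * y powr \<gamma>"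
  shows "exp (- l * (b - a)) * (b - a) powr H +
     (\<Sum>i<n. (b - a) / real n * l * exp (- l * (b - (a + real i * ((b - a) / real n)))) * (b - (a + real i * ((b - a) / real n))) powr H)
     \<le> 5 * M * l powr (- \<gamma>)"
proof -
  define \<Delta> where "\<Delta> = (b - a) / real n"
  have \<Delta>0: "0 \<le> \<Delta>" using ab by (simp add: \<Delta>_def)
  have first: "exp (- l * (b - a)) * (b - a) powr H \<le> M * l powr (- \<gamma>)"
  proof -
    have "exp (- l * (b - a)) * (b - a) powr H \<le> exp (- l * (b - a)) * (M * (b - a) powr \<gamma>)"
      using HM[of "b - a"] ab by (intro mult_left_mono) auto
    also have "\<dots> = M * (exp (- l * (b - a)) * (b - a) powr \<gamma>)" by simp
    also have "\<dots> \<le> M * l powr (- \<gamma>)" using term_bound(1)[OF l _ g, of "b - a"] ab M by (intro mult_left_mono) auto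
    finally show ?thesis .
  qed
  have second: "(\<Sum>i<n. \<Delta> * l * exp (- l * (b - (a + real i * \<Delta>))) * (b - (a + real i * \<Delta>)) powr H) \<le> 4 * M * l powr (- \<gamma>)"
  proof (cases "n = 0 \<or> a = b")
    case True
    then show ?thesis using M l by (auto simp: \<Delta>_def)
  next
    case False
    then have n0: "0 < real n" and \<Delta>p: "0 < \<Delta>" using ab by (auto simp: \<Delta>_def)
    have yi: "b - (a + real i * \<Delta>) = \<Delta> * (real n - real i)" for i
      using n0 by (simp add: \<Delta>_def field_simps)
    have "(\<Sum>i<n. \<Delta> * l * exp (- l * (b - (a + real i * \<Delta>))) * (b - (a + real i * \<Delta>)) powr H)
        \<le> (\<Sum>i<n. \<Delta> * l * (M * (2 * l powr (- \<gamma>) * exp (- (l * \<Delta> / 2) * (real n - real i)))))"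
    proof (intro sum_mono)
      fix i assume i: "i \<in> {..<n}"
      define y where "y = b - (a + real i * \<Delta>)"
      have "0 \<le> real n - real i" using i by simp
      then have y0: "0 \<le> y" using \<Delta>p unfolding y_def yi by simp
      have y1: "y \<le> b - a"
      proof -
        have "real n - real i \<le> real n" by simp
        then have "\<Delta> * (real n - real i) \<le> \<Delta> * real n" using \<Delta>p by (intro mult_left_mono) auto
        moreover have "\<Delta> * real n = b - a" using n0 by (simp add: \<Delta>_def)
        ultimately show ?thesis unfolding y_def yi by linarith
      qed
      have "exp (- l * y) * y powr H \<le> exp (- l * y) * (M * y powr \<gamma>)"
        using HM[OF y0 y1] by (intro mult_left_mono) auto
      also have "\<dots> = M * (exp (- l * y) * y powr \<gamma>)" by simp
      also have "\<dots> \<le> M * (2 * l powr (- \<gamma>) * exp (- l * y / 2))"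
        using term_bound(2)[OF l y0 g] M by (intro mult_left_mono) auto
      also have "\<dots> = M * (2 * l powr (- \<gamma>) * exp (- (l * \<Delta> / 2) * (real n - real i)))"
      proof -
        have "- l * y / 2 = - (l * \<Delta> / 2) * (real n - real i)" unfolding y_def yi by (simp add: field_simps)
        then show ?thesis by simp
      qed
      finally have "exp (- l * y) * y powr H \<le> M * (2 * l powr (- \<gamma>) * exp (- (l * \<Delta> / 2) * (real n - real i)))" .
      then have "\<Delta> * l * (exp (- l * y) * y powr H) \<le> \<Delta> * l * (M * (2 * l powr (- \<gamma>) * exp (- (l * \<Delta> / 2) * (real n - real i))))"
        using \<Delta>p l by (intro mult_left_mono) auto
      then show "\<Delta> * l * exp (- l * (b - (a + real i * \<Delta>))) * (b - (a + real i * \<Delta>)) powr H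
          \<le> \<Delta> * l * (M * (2 * l powr (- \<gamma>) * exp (- (l * \<Delta> / 2) * (real n - real i))))"
        by (simp add: y_def mult_ac)
    qed
    also have "\<dots> = (\<Delta> * l * M * 2 * l powr (- \<gamma>)) * (\<Sum>i<n. exp (- (l * \<Delta> / 2) * (real n - real i)))"
      by (simp add: sum_distrib_left mult_ac)
    also have "\<dots> \<le> (\<Delta> * l * M * 2 * l powr (- \<gamma>)) * (1 / (l * \<Delta> / 2))"
      using geo_bound[of "l * \<Delta> / 2" n] l \<Delta>p M by (intro mult_left_mono) auto
    also have "\<dots> = 4 * M * l powr (- \<gamma>)" using l \<Delta>p by (simp add: field_simps)
    finally show ?thesis .
  qed
  have "(\<Sum>i<n. (b - a) / real n * l * exp (- l * (b - (a + real i * ((b - a) / real n)))) * (b - (a + real i * ((b - a) / real n))) powr H)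
     = (\<Sum>i<n. \<Delta> * l * exp (- l * (b - (a + real i * \<Delta>))) * (b - (a + real i * \<Delta>)) powr H)"
    by (simp add: \<Delta>_def)
  then show ?thesis using first second by linarith
qed

lemma dd_sum_eq:
  assumes l: "0 \<le> l" and ab: "a \<le> b"
  shows "(\<Sum>j<Suc n. \<bar>dd A l a b n j\<bar> * \<bar>b - pp a b n j\<bar> powr H) =
    \<bar>A\<bar> * (exp (- l * (b - a)) * (b - a) powr H +
     (\<Sum>i<n. (b - a) / real n * l * exp (- l * (b - (a + real i * ((b - a) / real n)))) * (b - (a + real i * ((b - a) / real n))) powr H))"
proof -
  have nn: "\<bar>b - (a + real i * ((b - a) / real n))\<bar> = b - (a + real i * ((b - a) / real n))" if "i < n" for i
  proof -
    have "real i * ((b - a) / real n) \<le> b - a"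
    proof (cases "n = 0")
      case False
      have "real i * ((b - a) / real n) = (b - a) * (real i / real n)" by simp
      also have "\<dots> \<le> (b - a) * 1" using that ab False by (intro mult_left_mono) auto
      finally show ?thesis by simp
    qed (use ab in simp)
    then show ?thesis by simp
  qed
  have t: "\<bar>dd A l a b n (Suc i)\<bar> * \<bar>b - pp a b n (Suc i)\<bar> powr H = \<bar>A\<bar> * ((b - a) / real n * l * exp (- l * (b - (a + real i * ((b - a) / real n)))) * (b - (a + real i * ((b - a) / real n))) powr H)"
    if i: "i < n" for i
  proof -
    have pS: "pp a b n (Suc i) = a + real i * ((b - a) / real n)" by (simp add: pp_def)
    have dS: "dd A l a b n (Suc i) = (b - a) / real n * (l * (A * exp (- l * (b - (a + real i * ((b - a) / real n))))))"
      by (simp add: dd_def fA_def)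
    show ?thesis unfolding pS dS nn[OF i] using ab l by (simp add: abs_mult mult_ac)
  qed
  have t0: "\<bar>dd A l a b n 0\<bar> * \<bar>b - pp a b n 0\<bar> powr H = \<bar>A\<bar> * (exp (- l * (b - a)) * (b - a) powr H)"
    using ab by (simp add: dd_def pp_def fA_def abs_mult)
  show ?thesis
    unfolding sum.lessThan_Suc_shift t0 distrib_left sum_distrib_left
    by (simp add: t)
qed

lemma kappa_props:
  assumes tau: "0 < \<tau>" and t: "0 \<le> t"
  shows "0 \<le> kappa \<tau> t" "kappa \<tau> t \<le> t" "t - kappa \<tau> t \<le> \<tau>"
proof -
  have f1: "real_of_int \<lfloor>t / \<tau>\<rfloor> \<le> t / \<tau>" by (rule of_int_floor_le)
  have f2: "t / \<tau> < real_of_int \<lfloor>t / \<tau>\<rfloor> + 1" by (rule real_of_int_floor_add_one_gt)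
  have f0: "0 \<le> \<lfloor>t / \<tau>\<rfloor>" using tau t by simp
  show "0 \<le> kappa \<tau> t" using tau f0 by (simp add: kappa_def)
  have "\<tau> * real_of_int \<lfloor>t / \<tau>\<rfloor> \<le> \<tau> * (t / \<tau>)" using f1 tau by (intro mult_left_mono) auto
  then show "kappa \<tau> t \<le> t" using tau by (simp add: kappa_def)
  show "t - kappa \<tau> t \<le> \<tau>" using tau f2 by (simp add: kappa_def field_simps)
qed

lemma min_powr:
  fixes y \<beta> :: real
  assumes y: "0 \<le> y" and b: "0 \<le> \<beta>" "\<beta> \<le> 1"
  shows "min 1 y \<le> y powr \<beta>"
proof (cases "y \<le> 1")
  case True
  have "y powr 1 \<le> y powr \<beta>" by (rule powr_mono') (use True y b in auto)
  then show ?thesis using True y by (cases "y = 0") auto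
next
  case False
  then have "1 \<le> y powr \<beta>" using b by (simp add: ge_one_powr_ge_zero)
  then show ?thesis by simp
qed

lemma lam_pos: "1 \<le> k \<Longrightarrow> 0 < lam k"
  by (simp add: lam_def)

lemma B_sq:
  fixes H \<alpha> \<tau> l :: real
  assumes "0 < \<tau>" "0 < l"
  shows "(5 * \<tau> powr (H - \<alpha>) * l powr (- \<alpha>))^2 = 25 * (\<tau> powr (2 * (H - \<alpha>)) * l powr (- 2 * \<alpha>))"
proof -
  have "\<tau> powr (2 * (H - \<alpha>)) = \<tau> powr (H - \<alpha>) * \<tau> powr (H - \<alpha>)" by (simp add: powr_add[symmetric])
  moreover have "l powr (- 2 * \<alpha>) = l powr (- \<alpha>) * l powr (- \<alpha>)" by (simp add: powr_add[symmetric])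
  ultimately show ?thesis by (simp add: power2_eq_square)
qed

lemma lam_sum_bound:
  assumes a: "1/4 < \<alpha>"
  shows "(\<Sum>k=1..N. lam k powr (- 2 * \<alpha>)) \<le> suminf (\<lambda>k. real k powr (- 4 * \<alpha>))"
proof -
  have summ: "summable (\<lambda>k. real k powr (- 4 * \<alpha>))"
    using a by (subst summable_real_powr_iff) auto
  have "(\<Sum>k=1..N. lam k powr (- 2 * \<alpha>)) \<le> (\<Sum>k=1..N. real k powr (- 4 * \<alpha>))"
  proof (intro sum_mono)
    fix k assume k: "k \<in> {1..N}"
    have kp: "0 < real k * pi" using k by simp
    have lk: "lam k = (real k * pi) powr 2"
      using kp by (simp add: lam_def powr_realpow power_mult_distrib)
    have "lam k powr (- 2 * \<alpha>) = (real k * pi) powr (2 * (- 2 * \<alpha>))"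
      unfolding lk by (rule powr_powr)
    also have "\<dots> = real k powr (- 4 * \<alpha>) * pi powr (- 4 * \<alpha>)"
      using k by (simp add: powr_mult)
    also have "\<dots> \<le> real k powr (- 4 * \<alpha>) * 1"
    proof (intro mult_left_mono)
      have "pi powr (- 4 * \<alpha>) \<le> pi powr 0" using a pi_gt3 by (intro powr_mono) auto
      then show "pi powr (- 4 * \<alpha>) \<le> 1" by simp
    qed simp
    finally show "lam k powr (- 2 * \<alpha>) \<le> real k powr (- 4 * \<alpha>)" by simp
  qed
  also have "\<dots> \<le> suminf (\<lambda>k. real k powr (- 4 * \<alpha>))"
    by (rule sum_le_suminf[OF summ]) auto
  finally show ?thesis .
qed

lemma f2_eq: "(\<lambda>s. exp (- l * (t - s)) - exp (- l * (c - s))) = fA (exp (- l * (t - c)) - 1) l c"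
proof
  fix s
  have "exp (- l * (t - s)) = exp (- l * (t - c)) * exp (- l * (c - s))"
  proof -
    have "- l * (t - s) = - l * (t - c) + - l * (c - s)" by (simp add: algebra_simps)
    then show ?thesis by (metis exp_add)
  qed
  then show "exp (- l * (t - s)) - exp (- l * (c - s)) = fA (exp (- l * (t - c)) - 1) l c s"
    by (simp add: fA_def algebra_simps)
qed

lemma one_minus_exp_bound:
  fixes l \<delta> \<tau> \<beta> :: real
  assumes l: "0 < l" and d: "0 \<le> \<delta>" "\<delta> \<le> \<tau>" and b: "0 \<le> \<beta>" "\<beta> \<le> 1"
  shows "\<bar>exp (- l * \<delta>) - 1\<bar> \<le> (l * \<tau>) powr \<beta>"
proof -
  have e1: "exp (- l * \<delta>) \<le> 1" using l d by simp
  have e2: "1 - l * \<delta> \<le> exp (- l * \<delta>)" using exp_ge_add_one_self[of "- l * \<delta>"] by simp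
  have "\<bar>exp (- l * \<delta>) - 1\<bar> = 1 - exp (- l * \<delta>)" using e1 by simp
  also have "\<dots> \<le> min 1 (l * \<tau>)"
  proof -
    have "l * \<delta> \<le> l * \<tau>" using l d by (intro mult_left_mono) auto
    then show ?thesis using e2 by simp
  qed
  also have "\<dots> \<le> (l * \<tau>) powr \<beta>" by (rule min_powr) (use l d b in auto)
  finally show ?thesis .
qed

theorem mainTheorem7:
  fixes P :: "'a measure" and W :: "nat \<Rightarrow> real \<Rightarrow> 'a \<Rightarrow> real"
    and H T :: real
  assumes "prob_space P"
    and "1/2 < H" and "H < 1" and "0 < T"
    and "\<And>k. is_fbm P H (W k)"
    and "prob_space.indep_vars P (\<lambda>_. Pi\<^sub>M UNIV (\<lambda>_. borel)) (\<lambda>k \<omega> t. W k t \<omega>) UNIV"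
  shows "\<exists>\<epsilon>0>0. \<forall>\<epsilon>. 0 < \<epsilon> \<and> \<epsilon> < \<epsilon>0 \<longrightarrow> (\<exists>C. \<forall>(N::nat) (Mst::nat) t.
            0 < Mst \<and> 0 \<le> t \<and> t \<le> T \<longrightarrow>
            (\<integral>\<^sup>+\<omega>. ennreal (L4pow4 (Theta1 W N (T / real Mst) t \<omega>)) \<partial>P)
              \<le> ennreal (C * (T / real Mst) powr (4*H - 1 - 2*\<epsilon>)) \<and>
            (\<integral>\<^sup>+\<omega>. ennreal (L4pow4 (Theta2 W N (T / real Mst) t \<omega>)) \<partial>P)
              \<le> ennreal (C * (T / real Mst) powr (4*H - 1 - 2*\<epsilon>)))"
proof -
  note P = assms(1) and H1 = assms(2) and H2 = assms(3) and T0 = assms(4) and fbm = assms(5) and ind = assms(6)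
  define \<epsilon>0 where "\<epsilon>0 = 2 * H - 1/2"
  have e0: "0 < \<epsilon>0" using H1 by (simp add: \<epsilon>0_def)
  show ?thesis
  proof (rule exI[of _ \<epsilon>0], intro conjI allI impI e0)
    fix \<epsilon> :: real assume \<epsilon>: "0 < \<epsilon> \<and> \<epsilon> < \<epsilon>0"
    define \<alpha> where "\<alpha> = 1/4 + \<epsilon>/2"
    have \<alpha>1: "1/4 < \<alpha>" and \<alpha>2: "\<alpha> < H" and \<alpha>3: "\<alpha> \<le> 1" and \<alpha>4: "0 \<le> \<alpha>"
      using \<epsilon> H2 by (auto simp: \<alpha>_def \<epsilon>0_def)
    define Sinf where "Sinf = suminf (\<lambda>k. real k powr (- 4 * \<alpha>))"
    define C where "C = 12 * 625 * Sinf^2"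
    show "\<exists>C. \<forall>(N::nat) (Mst::nat) t.
            0 < Mst \<and> 0 \<le> t \<and> t \<le> T \<longrightarrow>
            (\<integral>\<^sup>+\<omega>. ennreal (L4pow4 (Theta1 W N (T / real Mst) t \<omega>)) \<partial>P)
              \<le> ennreal (C * (T / real Mst) powr (4*H - 1 - 2*\<epsilon>)) \<and>
            (\<integral>\<^sup>+\<omega>. ennreal (L4pow4 (Theta2 W N (T / real Mst) t \<omega>)) \<partial>P)
              \<le> ennreal (C * (T / real Mst) powr (4*H - 1 - 2*\<epsilon>))"
    proof (intro exI[of _ C] allI impI)
      fix N Mst :: nat and t :: real
      assume h: "0 < Mst \<and> 0 \<le> t \<and> t \<le> T"
      define \<tau> where "\<tau> = T / real Mst"
      have \<tau>0: "0 < \<tau>" using h T0 by (simp add: \<tau>_def)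
      note kp = kappa_props[OF \<tau>0, of t]
      define \<kappa> where "\<kappa> = kappa \<tau> t"
      have k1: "0 \<le> \<kappa>" and k2: "\<kappa> \<le> t" and k3: "t - \<kappa> \<le> \<tau>" using kp h by (auto simp: \<kappa>_def)
      define B where "B k = 5 * \<tau> powr (H - \<alpha>) * lam k powr (- \<alpha>)" for k
      have sumB: "12 * (\<Sum>k=1..N. (B k)^2)^2 \<le> C * \<tau> powr (4*H - 1 - 2*\<epsilon>)"
      proof -
        have "(\<Sum>k=1..N. (B k)^2) = 25 * \<tau> powr (2 * (H - \<alpha>)) * (\<Sum>k=1..N. lam k powr (- 2 * \<alpha>))"
          unfolding B_def sum_distrib_left
          by (intro sum.cong refl) (simp add: B_sq[OF \<tau>0 lam_pos])
        also have "\<dots> \<le> 25 * \<tau> powr (2 * (H - \<alpha>)) * Sinf"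
          unfolding Sinf_def by (intro mult_left_mono lam_sum_bound \<alpha>1) auto
        finally have s1: "(\<Sum>k=1..N. (B k)^2) \<le> 25 * \<tau> powr (2 * (H - \<alpha>)) * Sinf" .
        have s0: "0 \<le> (\<Sum>k=1..N. (B k)^2)" by (intro sum_nonneg) auto
        have "(\<Sum>k=1..N. (B k)^2)^2 \<le> (25 * \<tau> powr (2 * (H - \<alpha>)) * Sinf)^2"
          using s0 s1 by (intro power_mono) auto
        also have "\<dots> = 625 * Sinf^2 * (\<tau> powr (2 * (H - \<alpha>)))^2" by (simp add: power_mult_distrib)
        also have "(\<tau> powr (2 * (H - \<alpha>)))^2 = \<tau> powr (4*H - 1 - 2*\<epsilon>)"
        proof -
          have "(\<tau> powr (2 * (H - \<alpha>)))^2 = \<tau> powr (2 * (H - \<alpha>) + 2 * (H - \<alpha>))"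
            by (simp only: power2_eq_square powr_add)
          also have "2 * (H - \<alpha>) + 2 * (H - \<alpha>) = 4*H - 1 - 2*\<epsilon>" by (simp add: \<alpha>_def algebra_simps)
          finally show ?thesis .
        qed
        finally show ?thesis by (simp add: C_def)
      qed
      have eqT1: "Theta1 W N \<tau> t \<omega> = (\<lambda>x. \<Sum>k=1..N. wint (fA ((\<lambda>_. 1) k) (lam k) t) \<kappa> t (W k) \<omega> * phi k x)" for \<omega>
        unfolding Theta1_def fA_def \<kappa>_def by simp
      have Bk1: "(\<Sum>j<Suc n. \<bar>dd ((\<lambda>_. 1) k) (lam k) \<kappa> t n j\<bar> * \<bar>t - pp \<kappa> t n j\<bar> powr H) \<le> B k"
        if k: "k \<in> {1..N}" for k n
      proof -
        have l: "0 < lam k" using k by (intro lam_pos) auto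
        have HM: "y powr H \<le> \<tau> powr (H - \<alpha>) * y powr \<alpha>" if y: "0 \<le> y" "y \<le> t - \<kappa>" for y
        proof -
          have "y powr H = y powr (H - \<alpha>) * y powr \<alpha>" by (simp add: powr_add[symmetric])
          also have "\<dots> \<le> \<tau> powr (H - \<alpha>) * y powr \<alpha>"
            using y k3 \<alpha>2 by (intro mult_right_mono powr_mono2) auto
          finally show ?thesis .
        qed
        have "(\<Sum>j<Suc n. \<bar>dd ((\<lambda>_. 1) k) (lam k) \<kappa> t n j\<bar> * \<bar>t - pp \<kappa> t n j\<bar> powr H)
           = \<bar>1\<bar> * (exp (- lam k * (t - \<kappa>)) * (t - \<kappa>) powr H +
             (\<Sum>i<n. (t - \<kappa>) / real n * lam k * exp (- lam k * (t - (\<kappa> + real i * ((t - \<kappa>) / real n)))) * (t - (\<kappa> + real i * ((t - \<kappa>) / real n))) powr H))"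
          using dd_sum_eq[of "lam k" \<kappa> t 1 n H] l k2 by simp
        also have "\<dots> \<le> 5 * \<tau> powr (H - \<alpha>) * lam k powr (- \<alpha>)"
          using riemann_exp_bound[OF l k2 \<alpha>4 \<alpha>3 _ HM, of n] by simp
        finally show ?thesis by (simp add: B_def)
      qed
      have th1: "(\<integral>\<^sup>+\<omega>. ennreal (L4pow4 (Theta1 W N \<tau> t \<omega>)) \<partial>P) \<le> ennreal (12 * (\<Sum>k=1..N. (B k)^2)^2)"
        unfolding eqT1 by (rule main_bound[OF P fbm ind k1 k2 Bk1])
      define A2 where "A2 k = exp (- lam k * (t - \<kappa>)) - 1" for k
      have eqT2: "Theta2 W N \<tau> t \<omega> = (\<lambda>x. \<Sum>k=1..N. wint (fA (A2 k) (lam k) \<kappa>) 0 \<kappa> (W k) \<omega> * phi k x)" for \<omega>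
        unfolding Theta2_def A2_def \<kappa>_def f2_eq by simp
      have Bk2: "(\<Sum>j<Suc n. \<bar>dd (A2 k) (lam k) 0 \<kappa> n j\<bar> * \<bar>\<kappa> - pp 0 \<kappa> n j\<bar> powr H) \<le> B k"
        if k: "k \<in> {1..N}" for k n
      proof -
        have l: "0 < lam k" using k by (intro lam_pos) auto
        have HM: "y powr H \<le> 1 * y powr H" for y by simp
        have A: "\<bar>A2 k\<bar> \<le> (lam k * \<tau>) powr (H - \<alpha>)"
          unfolding A2_def by (rule one_minus_exp_bound) (use l k2 k3 \<alpha>2 H2 \<alpha>4 in auto)
        have "(\<Sum>j<Suc n. \<bar>dd (A2 k) (lam k) 0 \<kappa> n j\<bar> * \<bar>\<kappa> - pp 0 \<kappa> n j\<bar> powr H)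
           = \<bar>A2 k\<bar> * (exp (- lam k * (\<kappa> - 0)) * (\<kappa> - 0) powr H +
             (\<Sum>i<n. (\<kappa> - 0) / real n * lam k * exp (- lam k * (\<kappa> - (0 + real i * ((\<kappa> - 0) / real n)))) * (\<kappa> - (0 + real i * ((\<kappa> - 0) / real n))) powr H))"
          by (rule dd_sum_eq) (use l k1 in auto)
        also have "\<dots> \<le> (lam k * \<tau>) powr (H - \<alpha>) * (5 * 1 * lam k powr (- H))"
        proof (rule mult_mono[OF A])
          show "exp (- lam k * (\<kappa> - 0)) * (\<kappa> - 0) powr H +
             (\<Sum>i<n. (\<kappa> - 0) / real n * lam k * exp (- lam k * (\<kappa> - (0 + real i * ((\<kappa> - 0) / real n)))) * (\<kappa> - (0 + real i * ((\<kappa> - 0) / real n))) powr H)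
             \<le> 5 * 1 * lam k powr (- H)"
            by (rule riemann_exp_bound[OF l _ _ _ _ HM]) (use k1 H1 H2 in auto)
          show "0 \<le> exp (- lam k * (\<kappa> - 0)) * (\<kappa> - 0) powr H +
             (\<Sum>i<n. (\<kappa> - 0) / real n * lam k * exp (- lam k * (\<kappa> - (0 + real i * ((\<kappa> - 0) / real n)))) * (\<kappa> - (0 + real i * ((\<kappa> - 0) / real n))) powr H)"
            using l k1 by (intro add_nonneg_nonneg sum_nonneg mult_nonneg_nonneg) auto
        qed auto
        also have "\<dots> = 5 * \<tau> powr (H - \<alpha>) * lam k powr (- \<alpha>)"
        proof -
          have "(lam k * \<tau>) powr (H - \<alpha>) = lam k powr (H - \<alpha>) * \<tau> powr (H - \<alpha>)"
            using l \<tau>0 by (simp add: powr_mult)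
          moreover have "lam k powr (H - \<alpha>) * lam k powr (- H) = lam k powr (- \<alpha>)"
            by (simp add: powr_add[symmetric])
          ultimately show ?thesis by (simp add: mult_ac)
        qed
        finally show ?thesis by (simp add: B_def)
      qed
      have th2: "(\<integral>\<^sup>+\<omega>. ennreal (L4pow4 (Theta2 W N \<tau> t \<omega>)) \<partial>P) \<le> ennreal (12 * (\<Sum>k=1..N. (B k)^2)^2)"
        unfolding eqT2 by (rule main_bound[OF P fbm ind order_refl k1 Bk2])
      have fin: "ennreal (12 * (\<Sum>k=1..N. (B k)^2)^2) \<le> ennreal (C * \<tau> powr (4*H - 1 - 2*\<epsilon>))"
        by (rule ennreal_leI[OF sumB])
      show "(\<integral>\<^sup>+\<omega>. ennreal (L4pow4 (Theta1 W N (T / real Mst) t \<omega>)) \<partial>P)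
              \<le> ennreal (C * (T / real Mst) powr (4*H - 1 - 2*\<epsilon>)) \<and>
            (\<integral>\<^sup>+\<omega>. ennreal (L4pow4 (Theta2 W N (T / real Mst) t \<omega>)) \<partial>P)
              \<le> ennreal (C * (T / real Mst) powr (4*H - 1 - 2*\<epsilon>))"
        using order_trans[OF th1 fin] order_trans[OF th2 fin] by (simp add: \<tau>_def)
    qed
  qed
qed

end
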